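(* Let $C \geq 1$ and $\mathbf{C}_{\mathrm{lip}} \geq 1$. There exist $\alpha_0 > 0$ and $c > 0$, depending only on $C$ and $\mathbf{C}_{\mathrm{lip}}$, such that the following holds for every $\alpha \in (0,\alpha_0)$. Let $\ell_k, \ell_l$ be affine lines, and set $T_k' = \ell_k(C\alpha)$, $T_k = \ell_k(\alpha^{1/2})$, $T_l' = \ell_l(C\alpha)$, $T_l = \ell_l(\alpha^{1/2})$. Let $\gamma_k,\gamma_l$ be $\mathbf{C}_{\mathrm{lip}}\alpha$-Lipschitz graphs over $\ell_k,\ell_l$ respectively with $\gamma_k \cap B(1) \subset T_k'$ and $\gamma_l \cap B(1) \subset T_l'$. Let $E \subset \mathbb{R}^2$ and let $G_k, G_l$ be compact sets with \[ G_k \subset (E \cap \gamma_k) \setminus T_l \subset B(1), \qquad G_l \subset (E \cap \gamma_l) \setminus T_k \subset B(1), \] and $\mathcal{H}^1(G_k) \geq \alpha^3/C$, $\mathcal{H}^1(G_l) \geq \alpha^3/C$. Then the set of lines $\mathcal{L}(G_k,G_l) = \{\ell : \ell \cap G_k \neq \emptyset \text{ and } \ell \cap G_l \neq \emptyset\}$ satisfies $\eta(\mathcal{L}(G_k,G_l)) \geq c\,\alpha^7$, and consequently \[ \int_{\mathcal{L}(E)} \big(\#(E \cap \ell) - 1\big)\, d\eta(\ell) \geq c\,\alpha^7. \]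
   Context: For a line $\ell$ and $w>0$, $\ell(w)$ is the closed $w$-neighbourhood of $\ell$. $B(1)$ is the closed unit ball centred at the origin. A $\beta$-Lipschitz graph over a line $\ell$ with unit direction $u$ is a set $\{p + tu + f(t)u^\perp : t \in A\}$ with $p \in \ell$, $u^\perp \perp u$ unit, $A\subset\mathbb{R}$, $f$ $\beta$-Lipschitz. For $\theta\in[0,\pi)$, $\pi_\theta(x) = x\cdot(\cos\theta,\sin\theta)$; on the family $\mathcal{A}$ of affine lines, $\eta(\mathcal{L}) = \int_0^\pi \mathcal{H}^1(\{t : \pi_\theta^{-1}\{t\}\in\mathcal{L}\})\,d\theta$; $\mathcal{L}(E)$ is the set of lines meeting $E$; $\#$ is cardinality. *)

theory Defs
  imports "HOL-Analysis.Analysis"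
begin

type_synonym pt = "real \<times> real"

definition affine_line :: "pt set \<Rightarrow> bool" where
  "affine_line lne \<longleftrightarrow> (\<exists>p u. u \<noteq> 0 \<and> lne = {p + s *\<^sub>R u | s. True})"

definition nbhd :: "pt set \<Rightarrow> real \<Rightarrow> pt set" where
  "nbhd lne w = {x. \<exists>y\<in>lne. dist x y \<le> w}"

definition lip_graph :: "real \<Rightarrow> pt set \<Rightarrow> pt set \<Rightarrow> bool" where
  "lip_graph \<beta> lne \<gamma> \<longleftrightarrow>
     (\<exists>p u v A f. p \<in> lne \<and> norm u = 1 \<and> lne = {p + s *\<^sub>R u | s. True} \<and>
        norm v = 1 \<and> inner u v = 0 \<and> lipschitz_on \<beta> A f \<and>
        \<gamma> = {p + t *\<^sub>R u + f t *\<^sub>R v | t. t \<in> A})"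

definition hausdorff1_delta :: "real \<Rightarrow> 'a::metric_space set \<Rightarrow> ennreal" where
  "hausdorff1_delta \<delta> A =
     (INF C \<in> {C :: nat \<Rightarrow> 'a set. A \<subseteq> (\<Union>i. C i) \<and> (\<forall>i. bounded (C i) \<and> diameter (C i) \<le> \<delta>)}.
        (\<Sum>i. ennreal (diameter (C i))))"

definition hausdorff1 :: "'a::metric_space set \<Rightarrow> ennreal" where
  "hausdorff1 A = (SUP \<delta> \<in> {0<..}. hausdorff1_delta \<delta> A)"

definition proj :: "real \<Rightarrow> pt \<Rightarrow> real" where
  "proj \<theta> x = fst x * cos \<theta> + snd x * sin \<theta>"

definition line_of :: "real \<Rightarrow> real \<Rightarrow> pt set" where
  "line_of \<theta> t = {x. proj \<theta> x = t}"

definition eta :: "pt set set \<Rightarrow> ennreal" where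
  "eta L = (\<integral>\<^sup>+ \<theta> \<in> {0..<pi}. emeasure lebesgue {t. line_of \<theta> t \<in> L} \<partial>lborel)"

definition eta_integral :: "(pt set \<Rightarrow> ennreal) \<Rightarrow> ennreal" where
  "eta_integral F = (\<integral>\<^sup>+ \<theta> \<in> {0..<pi}. (\<integral>\<^sup>+ t. F (line_of \<theta> t) \<partial>lborel) \<partial>lborel)"

definition lines_meeting :: "pt set \<Rightarrow> pt set set" where
  "lines_meeting E = {lne. affine_line lne \<and> lne \<inter> E \<noteq> {}}"

definition lines_meeting2 :: "pt set \<Rightarrow> pt set \<Rightarrow> pt set set" where
  "lines_meeting2 G H = {lne. affine_line lne \<and> lne \<inter> G \<noteq> {} \<and> lne \<inter> H \<noteq> {}}"

definition ecard :: "'a set \<Rightarrow> ennreal" where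
  "ecard S = (if finite S then ennreal (real (card S)) else \<infinity>)"

end

theory Submission
  imports Defs
begin

definition cell :: "real \<Rightarrow> nat \<Rightarrow> nat \<Rightarrow> real set" where
  "cell h N i = {(real i - real N) * h ..< (real i - real N + 1) * h}"

lemma cell_disj: "h > 0 \<Longrightarrow> i \<noteq> j \<Longrightarrow> cell h N i \<inter> cell h N j = {}"
proof (rule ccontr)
  assume h: "h > 0" "i \<noteq> j" "cell h N i \<inter> cell h N j \<noteq> {}"
  then obtain x where x: "x \<in> cell h N i" "x \<in> cell h N j" by blast
  have "i < j \<or> j < i" using h by arith
  then show False
  proof
    assume "i < j" then have "real i + 1 \<le> real j" by simp
    then have "(real i - real N + 1) * h \<le> (real j - real N) * h" using h by (intro mult_right_mono) auto
    then show False using x by (auto simp: cell_def)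
  next
    assume "j < i" then have "real j + 1 \<le> real i" by simp
    then have "(real j - real N + 1) * h \<le> (real i - real N) * h" using h by (intro mult_right_mono) auto
    then show False using x by (auto simp: cell_def)
  qed
qed

lemma cell_diam: "x \<in> cell h N i \<Longrightarrow> y \<in> cell h N i \<Longrightarrow> \<bar>x - y\<bar> < h"
  by (auto simp: cell_def algebra_simps)

lemma grid:
  fixes S :: "real set" and e \<delta> :: real
  assumes S: "compact S" and e: "e > 0" and d: "\<delta> > 0"
  obtains h N where "h > 0" "h \<le> \<delta>" "\<forall>s\<in>S. \<exists>i<2*N. s \<in> cell h N i"
   "h * real (card {i. i < 2*N \<and> cell h N i \<inter> S \<noteq> {}}) \<le> measure lborel S + e"
proof -
  have Sb: "S \<in> sets borel" using S by (simp add: compact_imp_closed borel_closed)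
  obtain U where U: "open U" "S \<subseteq> U" "emeasure lborel (U - S) < e"
    using outer_regular_lborel[OF Sb e] by blast
  obtain dd where dd: "dd > 0" "\<forall>x\<in>S. \<forall>y\<in>-U. dd \<le> dist x y"
    using separate_compact_closed[OF S, of "-U"] U by auto
  define h where "h = min \<delta> (dd/2)"
  have h: "h > 0" "h \<le> \<delta>" "h < dd" using d dd by (auto simp: h_def)
  obtain R where R: "\<forall>s\<in>S. \<bar>s\<bar> \<le> R"
    using compact_imp_bounded[OF S] by (auto simp: bounded_iff real_norm_def)
  define N where "N = nat \<lceil>R/h\<rceil> + 1"
  have cov: "\<exists>i<2*N. s \<in> cell h N i" if s: "s \<in> S" for s
  proof -
    have "-R \<le> s" "s \<le> R" using R s by auto
    then have a: "-R/h \<le> s/h" "s/h \<le> R/h" using h by (simp_all add: divide_right_mono le_divide_eq)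
    have b: "R/h \<le> real (nat \<lceil>R/h\<rceil>)" by linarith
    define k where "k = \<lfloor>s/h\<rfloor>"
    have k1: "k + int N \<ge> 0" using a b unfolding k_def N_def by linarith
    have "k \<le> \<lceil>R/h\<rceil>" unfolding k_def using a(2) floor_mono floor_le_ceiling order_trans by blast
    moreover have "\<lceil>R/h\<rceil> \<le> int (nat \<lceil>R/h\<rceil>)" by simp
    moreover have "int N = int (nat \<lceil>R/h\<rceil>) + 1" by (simp add: N_def)
    ultimately have k2: "k + int N < 2 * int N" by linarith
    define i where "i = nat (k + int N)"
    have ii: "real i - real N = real_of_int k" using k1 unfolding i_def by simp
    have "real_of_int k * h \<le> s" using h unfolding k_def
      by (metis floor_divide_lower)
    moreover have "s < (real_of_int k + 1) * h" using h unfolding k_def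
      by (metis floor_divide_upper)
    ultimately have "s \<in> cell h N i" unfolding cell_def ii by simp
    moreover have "i < 2 * N" using k1 k2 unfolding i_def by linarith
    ultimately show ?thesis by blast
  qed
  define I where "I = {i. i < 2*N \<and> cell h N i \<inter> S \<noteq> {}}"
  have finI: "finite I" unfolding I_def by simp
  have sub: "(\<Union>i\<in>I. cell h N i) \<subseteq> U"
  proof clarify
    fix i x assume i: "i \<in> I" and x: "x \<in> cell h N i"
    then obtain s where s: "s \<in> S" "s \<in> cell h N i" unfolding I_def by blast
    have "dist s x < dd" using cell_diam[OF s(2) x] h by (simp add: dist_real_def)
    then show "x \<in> U" using dd s by force
  qed
  have "emeasure lborel (\<Union>i\<in>I. cell h N i) = (\<Sum>i\<in>I. emeasure lborel (cell h N i))"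
    by (rule sum_emeasure[symmetric]) (auto simp: finI cell_def disjoint_family_on_def cell_disj h)
  also have "\<dots> = (\<Sum>i\<in>I. ennreal h)"
    using h by (intro sum.cong) (auto simp: cell_def algebra_simps)
  also have "\<dots> = ennreal (h * real (card I))"
    using h by (simp add: ennreal_of_nat_eq_real_of_nat ennreal_mult' mult.commute)
  finally have eq: "emeasure lborel (\<Union>i\<in>I. cell h N i) = ennreal (h * real (card I))" .
  have "emeasure lborel (\<Union>i\<in>I. cell h N i) \<le> emeasure lborel U"
    using sub U by (intro emeasure_mono) auto
  also have "\<dots> = emeasure lborel S + emeasure lborel (U - S)"
    using U Sb by (metis Diff_partition Diff_disjoint plus_emeasure borel_open sets_lborel sets.Diff
         inf_commute)
  also have "\<dots> \<le> ennreal (measure lborel S) + ennreal e"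
    using U(3) emeasure_bounded_finite[OF compact_imp_bounded[OF S]]
    by (intro add_mono) (auto simp: emeasure_eq_ennreal_measure less_imp_le)
  finally have "ennreal (h * real (card I)) \<le> ennreal (measure lborel S + e)"
    using eq e by (simp add: ennreal_plus)
  then have "h * real (card I) \<le> measure lborel S + e"
    using e by (subst (asm) ennreal_le_iff) (auto intro: add_nonneg_pos)
  then show ?thesis using that h cov unfolding I_def by blast
qed

lemma lip1d:
  fixes S T :: "real set" and R :: "real \<Rightarrow> real \<Rightarrow> bool" and M :: real
  assumes S: "compact S" and M: "M > 0"
  and cov: "\<forall>t\<in>T. \<exists>s\<in>S. R s t"
  and lip: "\<forall>s t s' t'. s\<in>S \<longrightarrow> s'\<in>S \<longrightarrow> R s t \<longrightarrow> R s' t' \<longrightarrow> \<bar>t - t'\<bar> \<le> M * \<bar>s - s'\<bar>"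
  shows "emeasure lborel T \<le> ennreal (2*M * measure lborel S)"
proof (cases "T \<in> sets lborel")
  case False
  then show ?thesis by (simp add: emeasure_notin_sets)
next
  case Tm: True
  show ?thesis
  proof (rule ennreal_le_epsilon)
    fix e :: real assume e: "e > 0"
    obtain h N where h: "h > 0" "h \<le> 1" and cv: "\<forall>s\<in>S. \<exists>i<2*N. s \<in> cell h N i"
      and hc: "h * real (card {i. i < 2*N \<and> cell h N i \<inter> S \<noteq> {}}) \<le> measure lborel S + e/(2*M)"
      using grid[OF S, of "e/(2*M)" 1] e M by auto
    define I where "I = {i. i < 2*N \<and> cell h N i \<inter> S \<noteq> {}}"
    have finI: "finite I" unfolding I_def by simp
    define Ti where "Ti i = {t\<in>T. \<exists>s\<in>S\<inter>cell h N i. R s t}" for i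
    define c where "c i = (SOME t. t \<in> Ti i)" for i
    have TU: "T \<subseteq> (\<Union>i\<in>I. {c i - M*h .. c i + M*h})"
    proof
      fix t assume t: "t \<in> T"
      then obtain s where s: "s \<in> S" "R s t" using cov by blast
      then obtain i where i: "i < 2*N" "s \<in> cell h N i" using cv by blast
      have tT: "t \<in> Ti i" using t s i unfolding Ti_def by blast
      then have "c i \<in> Ti i" unfolding c_def by (rule someI)
      then obtain s' where s': "s' \<in> S" "s' \<in> cell h N i" "R s' (c i)" unfolding Ti_def by blast
      have "\<bar>t - c i\<bar> \<le> M * \<bar>s - s'\<bar>" using lip s s' by blast
      also have "\<dots> \<le> M * h" using cell_diam[OF i(2) s'(2)] M by (intro mult_left_mono) auto
      finally have "t \<in> {c i - M*h .. c i + M*h}" by auto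
      moreover have "i \<in> I" using i s unfolding I_def by blast
      ultimately show "t \<in> (\<Union>i\<in>I. {c i - M*h .. c i + M*h})" by blast
    qed
    have "emeasure lborel T \<le> emeasure lborel (\<Union>i\<in>I. {c i - M*h .. c i + M*h})"
      using TU by (intro emeasure_mono) auto
    also have "\<dots> \<le> (\<Sum>i\<in>I. emeasure lborel {c i - M*h .. c i + M*h})"
      using finI by (intro emeasure_subadditive_finite) auto
    also have "\<dots> = (\<Sum>i\<in>I. ennreal (2*M*h))"
      using M h by (intro sum.cong) (auto simp: algebra_simps)
    also have "\<dots> = of_nat (card I) * ennreal (2*M*h)" by simp
    also have "\<dots> = ennreal (2*M*(h * real (card I)))"
    proof -
      have X: "2*M*(h * real (card I)) = real (card I) * (2*M*h)" by algebra
      show ?thesis unfolding X using M h by (simp add: ennreal_mult ennreal_of_nat_eq_real_of_nat)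
    qed
    also have "\<dots> \<le> ennreal (2*M*(measure lborel S + e/(2*M)))"
      using hc M unfolding I_def by (intro ennreal_leI mult_left_mono) auto
    also have "\<dots> = ennreal (2*M * measure lborel S) + ennreal e"
    proof -
      have X: "2*M*(measure lborel S + e/(2*M)) = 2*M*measure lborel S + e" using M by (simp add: field_simps)
      show ?thesis unfolding X using M e by (intro ennreal_plus) auto
    qed
    finally show "emeasure lborel T \<le> ennreal (2*M * measure lborel S) + ennreal e" .
  qed
qed

lemma haus_bound:
  fixes G :: "pt set" and P :: "pt \<Rightarrow> real" and K :: real
  assumes S: "compact (P ` G)" and K: "K > 0"
  and lip: "\<forall>x\<in>G. \<forall>y\<in>G. dist x y \<le> K * \<bar>P x - P y\<bar>"
  shows "hausdorff1 G \<le> ennreal (K * measure lborel (P ` G))"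
  unfolding hausdorff1_def
proof (rule SUP_least)
  fix \<delta> :: real assume "\<delta> \<in> {0<..}"
  then have d: "\<delta> > 0" by simp
  show "hausdorff1_delta \<delta> G \<le> ennreal (K * measure lborel (P ` G))"
  proof (rule ennreal_le_epsilon)
    fix e :: real assume e: "e > 0"
    obtain h N where h: "h > 0" "h \<le> \<delta>/K" and cv: "\<forall>s\<in>P ` G. \<exists>i<2*N. s \<in> cell h N i"
      and hc: "h * real (card {i. i < 2*N \<and> cell h N i \<inter> P ` G \<noteq> {}}) \<le> measure lborel (P ` G) + e/K"
      using grid[OF S, of "e/K" "\<delta>/K"] e K d by auto
    define I where "I = {i. i < 2*N \<and> cell h N i \<inter> P ` G \<noteq> {}}"
    have finI: "finite I" unfolding I_def by simp
    define C where "C i = (if i < 2*N then {x\<in>G. P x \<in> cell h N i} else {})" for i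
    have Cd: "\<forall>x\<in>C i. \<forall>y\<in>C i. dist x y \<le> K * h" for i
    proof (intro ballI)
      fix x y assume "x \<in> C i" "y \<in> C i"
      then have xy: "x \<in> G" "y \<in> G" "P x \<in> cell h N i" "P y \<in> cell h N i" by (auto simp: C_def split: if_splits)
      have "dist x y \<le> K * \<bar>P x - P y\<bar>" using lip xy by blast
      also have "\<dots> \<le> K * h" using cell_diam[OF xy(3,4)] K by (intro mult_left_mono) auto
      finally show "dist x y \<le> K * h" .
    qed
    have bC: "bounded (C i)" for i
    proof (cases "C i = {}")
      case False
      then obtain x0 where x0: "x0 \<in> C i" by blast
      have "C i \<subseteq> cball x0 (K*h)" using Cd x0 by (auto simp: dist_commute)
      then show ?thesis using bounded_cball bounded_subset by blast
    qed simp
    have dC: "diameter (C i) \<le> K * h" for i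
      using Cd K h by (intro diameter_le) (auto simp: dist_norm)
    have memb: "C \<in> {C :: nat \<Rightarrow> pt set. G \<subseteq> (\<Union>i. C i) \<and> (\<forall>i. bounded (C i) \<and> diameter (C i) \<le> \<delta>)}"
    proof (intro CollectI conjI allI subsetI)
      fix x assume x: "x \<in> G"
      then obtain i where "i < 2*N" "P x \<in> cell h N i" using cv by blast
      then show "x \<in> (\<Union>i. C i)" using x by (auto simp: C_def)
    next
      fix i show "bounded (C i)" by (rule bC)
      have "K * h \<le> \<delta>" using h K by (simp add: field_simps)
      then show "diameter (C i) \<le> \<delta>" using dC[of i] by linarith
    qed
    have Cnot: "C i = {}" if "i \<notin> I" for i
      using that unfolding C_def I_def by auto
    have "hausdorff1_delta \<delta> G \<le> (\<Sum>i. ennreal (diameter (C i)))"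
      unfolding hausdorff1_delta_def by (rule INF_lower[OF memb])
    also have "(\<Sum>i. ennreal (diameter (C i))) = (\<Sum>i\<in>I. ennreal (diameter (C i)))"
      using finI Cnot by (intro suminf_finite) auto
    also have "\<dots> \<le> (\<Sum>i\<in>I. ennreal (K * h))"
      using dC by (intro sum_mono ennreal_leI) auto
    also have "\<dots> = of_nat (card I) * ennreal (K*h)" by simp
    also have "\<dots> = ennreal (K*(h * real (card I)))"
    proof -
      have X: "K*(h * real (card I)) = real (card I) * (K*h)" by algebra
      show ?thesis unfolding X using K h by (simp add: ennreal_mult ennreal_of_nat_eq_real_of_nat)
    qed
    also have "\<dots> \<le> ennreal (K*(measure lborel (P ` G) + e/K))"
      using hc K unfolding I_def by (intro ennreal_leI mult_left_mono) auto
    also have "\<dots> = ennreal (K * measure lborel (P ` G)) + ennreal e"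
    proof -
      have X: "K*(measure lborel (P ` G) + e/K) = K*measure lborel (P ` G) + e" using K by (simp add: field_simps)
      show ?thesis unfolding X using K e by (intro ennreal_plus) auto
    qed
    finally show "hausdorff1_delta \<delta> G \<le> ennreal (K * measure lborel (P ` G)) + ennreal e" .
  qed
qed

lemma ortho_inner:
  fixes u v a b :: pt
  assumes u: "norm u = 1" and v: "norm v = 1" and uv: "inner u v = 0"
  shows "inner a b = inner a u * inner b u + inner a v * inner b v"
proof -
  obtain u1 u2 where U: "u = (u1,u2)" by (cases u)
  obtain v1 v2 where V: "v = (v1,v2)" by (cases v)
  obtain a1 a2 where A: "a = (a1,a2)" by (cases a)
  obtain b1 b2 where B: "b = (b1,b2)" by (cases b)
  have h1: "u1*u1 + u2*u2 = 1" using u U by (simp add: norm_Pair power2_eq_square)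
  have h2: "v1* v1 + v2* v2 = 1" using v V by (simp add: norm_Pair power2_eq_square)
  have h3: "u1* v1 + u2* v2 = 0" using uv U V by (simp add: inner_prod_def)
  have "a1*b1 + a2*b2 = (a1*u1+a2*u2)*(b1*u1+b2*u2) + (a1* v1+a2* v2)*(b1* v1+b2* v2)"
    using h1 h2 h3 by algebra
  then show ?thesis using U V A B by (simp add: inner_prod_def)
qed

lemma norm_sq_ortho:
  fixes u v a :: pt
  assumes "norm u = 1" "norm v = 1" "inner u v = 0"
  shows "(norm a)^2 = (inner a u)^2 + (inner a v)^2"
  unfolding power2_norm_eq_inner using ortho_inner[OF assms, of a a] by (simp add: power2_eq_square)

lemma nbhd_in:
  fixes u v p x :: pt
  assumes u: "norm u = 1" and v: "norm v = 1" and uv: "inner u v = 0"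
    and L: "L = {p + s *\<^sub>R u | s. True}" and x: "x \<in> nbhd L r"
  shows "\<bar>inner (x - p) v\<bar> \<le> r"
proof -
  obtain y where y: "y \<in> L" "dist x y \<le> r" using x by (auto simp: nbhd_def)
  then obtain s where s: "y = p + s *\<^sub>R u" using L by auto
  have "inner (x - p) v = inner (x - y) v + s * inner u v"
    using s by (simp add: algebra_simps inner_diff_left inner_add_left)
  then have "inner (x - p) v = inner (x - y) v" using uv by simp
  moreover have "\<bar>inner (x - y) v\<bar> \<le> norm (x - y) * norm v" by (rule Cauchy_Schwarz_ineq2)
  ultimately show ?thesis using v y(2) by (simp add: dist_norm)
qed

lemma nbhd_out:
  fixes u v p x :: pt
  assumes u: "norm u = 1" and v: "norm v = 1" and uv: "inner u v = 0"
    and L: "L = {p + s *\<^sub>R u | s. True}" and x: "x \<notin> nbhd L r"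
  shows "\<bar>inner (x - p) v\<bar> > r"
proof -
  define z where "z = p + inner (x - p) u *\<^sub>R u"
  have zL: "z \<in> L" using L z_def by auto
  then have "\<not> dist x z \<le> r" using x by (auto simp: nbhd_def)
  then have d: "norm (x - z) > r" by (simp add: dist_norm)
  have uu: "inner u u = 1" using u by (simp add: norm_eq_1)
  have a: "inner (x - z) u = 0" unfolding z_def using uu
    by (simp add: inner_diff_left inner_add_left algebra_simps)
  have b: "inner (x - z) v = inner (x - p) v" unfolding z_def using uv
    by (simp add: inner_diff_left inner_add_left algebra_simps)
  have "(norm (x - z))^2 = (inner (x - p) v)^2"
    using norm_sq_ortho[OF u v uv, of "x - z"] a b by simp
  then have "sqrt ((norm (x - z))^2) = sqrt ((inner (x - p) v)^2)" by simp
  then have "norm (x - z) = \<bar>inner (x - p) v\<bar>" by (simp only: real_sqrt_abs abs_norm_cancel)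
  then show ?thesis using d by simp
qed

lemma transv:
  fixes u v p x y e :: pt
  assumes u: "norm u = 1" and v: "norm v = 1" and uv: "inner u v = 0"
    and fx: "\<bar>inner (x - p) v\<bar> > r" and ny: "\<bar>inner (y - p) v\<bar> \<le> c" and c: "c \<le> r/2"
    and r: "r > 0" and w2: "norm (y - x) \<le> 2" and e: "norm e = 1" and ew: "inner e (y - x) = 0"
  shows "\<bar>inner e u\<bar> \<ge> r/4"
proof -
  define w where "w = y - x"
  have wv: "inner w v = inner (y - p) v - inner (x - p) v"
    unfolding w_def by (simp add: inner_diff_left)
  have wv2: "\<bar>inner w v\<bar> \<ge> r/2" using wv fx ny c by linarith
  have e1: "(inner e u)^2 + (inner e v)^2 = 1" using norm_sq_ortho[OF u v uv, of e] e by simp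
  have nw: "(norm w)^2 = (inner w u)^2 + (inner w v)^2" using norm_sq_ortho[OF u v uv, of w] .
  have ew0: "inner e u * inner w u + inner e v * inner w v = 0"
    using ortho_inner[OF u v uv, of e w] ew unfolding w_def by simp
  have key: "(inner e u)^2 * (norm w)^2 = (inner w v)^2"
    unfolding nw using ew0 e1 by algebra
  have "norm w * norm w \<le> 2 * 2" using w2 unfolding w_def by (intro mult_mono) auto
  then have nw4: "(norm w)^2 \<le> 4" by (simp add: power2_eq_square)
  then have "(inner e u)^2 * (norm w)^2 \<le> (inner e u)^2 * 4" by (intro mult_left_mono) auto
  moreover have "(r/2)^2 \<le> \<bar>inner w v\<bar>^2" using wv2 r by (intro power_mono) auto
  ultimately have "(r/4)^2 \<le> (inner e u)^2" using key by (simp add: power_divide)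
  then have "\<bar>r/4\<bar> \<le> \<bar>inner e u\<bar>" by (simp only: abs_le_square_iff)
  then show ?thesis using r by simp
qed

lemma graph_coords:
  fixes u v p :: pt
  assumes u: "norm u = 1" and v: "norm v = 1" and uv: "inner u v = 0"
  shows "inner (p + t *\<^sub>R u + a *\<^sub>R v - p) u = t" "inner (p + t *\<^sub>R u + a *\<^sub>R v - p) v = a"
proof -
  have uu: "inner u u = 1" "inner v v = 1" using u v by (simp_all add: norm_eq_1)
  have vu: "inner v u = 0" using uv by (simp add: inner_commute)
  show "inner (p + t *\<^sub>R u + a *\<^sub>R v - p) u = t" "inner (p + t *\<^sub>R u + a *\<^sub>R v - p) v = a"
    using uu uv vu by (simp_all add: inner_add_left)
qed

lemma G2:
  fixes u v p e :: pt
  assumes u: "norm u = 1" and v: "norm v = 1" and uv: "inner u v = 0"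
    and e: "norm e = 1" and eu: "\<bar>inner e u\<bar> \<ge> r/4" and b: "\<beta> \<le> r/8"
    and f: "\<bar>a - a'\<bar> \<le> \<beta> * \<bar>t - t'\<bar>"
  shows "\<bar>t - t'\<bar> * (r/8) \<le> \<bar>inner e ((p + t *\<^sub>R u + a *\<^sub>R v) - (p + t' *\<^sub>R u + a' *\<^sub>R v))\<bar>"
proof -
  have eq: "inner e ((p + t *\<^sub>R u + a *\<^sub>R v) - (p + t' *\<^sub>R u + a' *\<^sub>R v))
      = (t - t') * inner e u + (a - a') * inner e v"
    by (simp add: inner_diff_right inner_add_right algebra_simps)
  have ev: "\<bar>inner e v\<bar> \<le> 1" using Cauchy_Schwarz_ineq2[of e v] e v by simp
  have "\<bar>(a - a') * inner e v\<bar> \<le> \<beta> * \<bar>t - t'\<bar>"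
  proof -
    have "\<bar>a - a'\<bar> * \<bar>inner e v\<bar> \<le> \<bar>a - a'\<bar>" using ev by (intro mult_left_le) auto
    then show ?thesis using f by (simp add: abs_mult)
  qed
  moreover have "\<bar>(t - t') * inner e u\<bar> \<ge> \<bar>t - t'\<bar> * (r/4)"
  proof -
    have "\<bar>t - t'\<bar> * (r/4) \<le> \<bar>t - t'\<bar> * \<bar>inner e u\<bar>" by (rule mult_left_mono[OF eu abs_ge_zero])
    then show ?thesis by (simp only: abs_mult)
  qed
  moreover have "\<beta> * \<bar>t - t'\<bar> \<le> \<bar>t - t'\<bar> * (r/8)"
    using mult_left_mono[OF b abs_ge_zero[of "t - t'"]] by (simp only: mult.commute)
  ultimately show ?thesis unfolding eq by linarith
qed

lemma angle_exists:
  fixes w :: pt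
  assumes "w \<noteq> 0"
  shows "\<exists>\<theta>. 0 \<le> \<theta> \<and> \<theta> < pi \<and> fst w * cos \<theta> + snd w * sin \<theta> = 0"
proof (cases "snd w = 0")
  case True
  then show ?thesis by (intro exI[of _ "pi/2"]) auto
next
  case False
  define t0 where "t0 = arctan (- fst w / snd w)"
  have b: "- (pi/2) < t0" "t0 < pi/2" using arctan_bounded unfolding t0_def by auto
  have c: "cos t0 \<noteq> 0" unfolding t0_def by simp
  have "sin t0 = - fst w / snd w * cos t0"
    using tan_arctan[of "- fst w / snd w"] c unfolding t0_def tan_def by (simp add: field_simps)
  then have z: "fst w * cos t0 + snd w * sin t0 = 0" using False by (simp add: field_simps)
  show ?thesis
  proof (cases "t0 \<ge> 0")
    case True
    then show ?thesis using z b by (intro exI[of _ t0]) auto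
  next
    case f2: False
    have "fst w * cos (t0 + pi) + snd w * sin (t0 + pi) = 0" using z by simp
    then show ?thesis using f2 b by (intro exI[of _ "t0 + pi"]) auto
  qed
qed

lemma e_lip: "norm ((cos a, sin a) - (cos b, sin b) :: pt) \<le> \<bar>a - b\<bar>"
proof -
  have "(norm ((cos a, sin a) - (cos b, sin b) :: pt))^2 = (cos a - cos b)^2 + (sin a - sin b)^2"
    by (simp add: norm_Pair)
  also have "\<dots> = 2 - 2 * cos (a - b)"
  proof -
    have "(cos a)^2 + (sin a)^2 = 1" "(cos b)^2 + (sin b)^2 = 1" by simp_all
    then show ?thesis unfolding cos_diff by algebra
  qed
  also have "\<dots> = 4 * (sin ((a - b)/2))^2"
  proof -
    have "2 * ((a - b)/2) = a - b" by simp
    then have "cos (a - b) = 1 - 2 * (sin ((a - b)/2))^2" using cos_double_sin[of "(a-b)/2"] by metis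
    then show ?thesis by simp
  qed
  also have "\<dots> \<le> 4 * ((a - b)/2)^2"
    using abs_sin_x_le_abs_x[of "(a-b)/2"] by (simp only: abs_le_square_iff mult_le_cancel_left) simp
  also have "\<dots> = (a - b)^2" by (simp add: power_divide)
  finally show ?thesis by (simp add: abs_le_square_iff[symmetric])
qed

lemma cs_aux: "(a::real) * (cos th * cos th) + a * (sin th * sin th) = a"
  "a * (sin th * sin th) + a * (cos th * cos th) = a"
  by (metis distrib_left mult_1_right sin_cos_squared_add3 add.commute)+

lemma line_of_affine: "affine_line (line_of \<theta> t)"
  unfolding affine_line_def
proof (intro exI conjI)
  show "((-sin \<theta>, cos \<theta>)::pt) \<noteq> 0"
    by (metis prod.inject zero_prod_def neg_0_equal_iff_equal sin_cos_squared_add power2_eq_square mult_zero_left add_0 zero_neq_one)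
  show "line_of \<theta> t = {(t * cos \<theta>, t * sin \<theta>) + s *\<^sub>R (- sin \<theta>, cos \<theta>) |s. True}"
  proof (intro set_eqI iffI)
    fix x :: pt assume "x \<in> line_of \<theta> t"
    then obtain a b where ab: "x = (a, b)" "a * cos \<theta> + b * sin \<theta> = t"
      by (cases x) (simp add: line_of_def proj_def)
    define s where "s = - a * sin \<theta> + b * cos \<theta>"
    have sc: "(sin \<theta>)^2 + (cos \<theta>)^2 = 1" by simp
    have "t * cos \<theta> - s * sin \<theta> = a * ((sin \<theta>)^2 + (cos \<theta>)^2)"
      unfolding s_def using ab(2)[symmetric] by (simp add: algebra_simps power2_eq_square cs_aux)
    then have e1: "a = t * cos \<theta> - s * sin \<theta>" using sc by simp
    have "t * sin \<theta> + s * cos \<theta> = b * ((sin \<theta>)^2 + (cos \<theta>)^2)"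
      unfolding s_def using ab(2)[symmetric] by (simp add: algebra_simps power2_eq_square cs_aux)
    then have e2: "b = t * sin \<theta> + s * cos \<theta>" using sc by simp
    have "x = (t * cos \<theta>, t * sin \<theta>) + s *\<^sub>R (- sin \<theta>, cos \<theta>)"
      using ab(1) e1 e2 by simp
    then show "x \<in> {(t * cos \<theta>, t * sin \<theta>) + s *\<^sub>R (- sin \<theta>, cos \<theta>) |s. True}" by blast
  next
    fix x :: pt assume "x \<in> {(t * cos \<theta>, t * sin \<theta>) + s *\<^sub>R (- sin \<theta>, cos \<theta>) |s. True}"
    then obtain s where "x = (t * cos \<theta>, t * sin \<theta>) + s *\<^sub>R (- sin \<theta>, cos \<theta>)" by blast
    moreover have "(sin \<theta>)^2 + (cos \<theta>)^2 = 1" by simp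
    ultimately have "fst x * cos \<theta> + snd x * sin \<theta> = t * ((sin \<theta>)^2 + (cos \<theta>)^2)"
      by (simp add: algebra_simps power2_eq_square cs_aux)
    then have "fst x * cos \<theta> + snd x * sin \<theta> = t" by simp
    then show "x \<in> line_of \<theta> t" by (simp add: line_of_def proj_def)
  qed
qed

lemma sect_eq: "{t. line_of \<theta> t \<in> lines_meeting2 G H} = proj \<theta> ` G \<inter> proj \<theta> ` H"
  unfolding lines_meeting2_def line_of_def using line_of_affine[of \<theta>]
  by (auto simp: line_of_def) (metis image_eqI)+

lemma proj_inner: "proj \<theta> x = inner x (cos \<theta>, sin \<theta>)"
  by (simp add: proj_def inner_prod_def)

lemma compact_zero_set:
  fixes g :: "'a::heine_borel \<Rightarrow> real"
  assumes "compact S" "continuous_on UNIV g"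
  shows "compact {z\<in>S. g z = 0}"
proof -
  have "closed {z. g z = 0}" using closed_Collect_eq[OF assms(2), of "\<lambda>_. 0"] by simp
  moreover have "{z\<in>S. g z = 0} = S \<inter> {z. g z = 0}" by auto
  ultimately show ?thesis using assms(1) compact_Int_closed by metis
qed

lemma lebesgue_borel_eq: "A \<in> sets borel \<Longrightarrow> emeasure lebesgue A = emeasure lborel A"
  by simp

lemma core:
  fixes \<alpha> C Clip r :: real and lk ll \<gamma>k \<gamma>l E Gk Gl :: "pt set"
  assumes C: "C \<ge> 1" and a0: "\<alpha> > 0" and r: "r = sqrt \<alpha>"
    and cr: "C * \<alpha> \<le> r/2" and br: "Clip * \<alpha> \<le> r/8" and b1: "Clip * \<alpha> \<le> 1" and b0: "Clip * \<alpha> \<ge> 0"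
    and lgk: "lip_graph (Clip * \<alpha>) lk \<gamma>k" and lgl: "lip_graph (Clip * \<alpha>) ll \<gamma>l"
    and nk: "\<gamma>k \<inter> cball 0 1 \<subseteq> nbhd lk (C * \<alpha>)" and nl: "\<gamma>l \<inter> cball 0 1 \<subseteq> nbhd ll (C * \<alpha>)"
    and cGk: "compact Gk" and cGl: "compact Gl"
    and Gk1: "Gk \<subseteq> (E \<inter> \<gamma>k) - nbhd ll r" and Gk2: "(E \<inter> \<gamma>k) - nbhd ll r \<subseteq> cball 0 1"
    and Gl1: "Gl \<subseteq> (E \<inter> \<gamma>l) - nbhd lk r" and Gl2: "(E \<inter> \<gamma>l) - nbhd lk r \<subseteq> cball 0 1"
    and Hk: "hausdorff1 Gk \<ge> ennreal (\<alpha>^3/C)" and Hl: "hausdorff1 Gl \<ge> ennreal (\<alpha>^3/C)"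
  shows "eta (lines_meeting2 Gk Gl) \<ge> ennreal (\<alpha>^7/(2048*C^2))"
proof -
  define \<beta> where "\<beta> = Clip * \<alpha>"
  have r0: "r > 0" using r a0 by simp
  have rr: "r * r = \<alpha>" using r a0 by simp
  obtain pk uk vk Ak fk where k: "pk \<in> lk" "norm uk = 1" "lk = {pk + s *\<^sub>R uk | s. True}"
     "norm vk = 1" "inner uk vk = 0" "lipschitz_on \<beta> Ak fk" "\<gamma>k = {pk + t *\<^sub>R uk + fk t *\<^sub>R vk | t. t \<in> Ak}"
    using lgk unfolding lip_graph_def \<beta>_def by blast
  obtain pl ul vl Al fl where l: "pl \<in> ll" "norm ul = 1" "ll = {pl + s *\<^sub>R ul | s. True}"
     "norm vl = 1" "inner ul vl = 0" "lipschitz_on \<beta> Al fl" "\<gamma>l = {pl + t *\<^sub>R ul + fl t *\<^sub>R vl | t. t \<in> Al}"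
    using lgl unfolding lip_graph_def \<beta>_def by blast
  define Pk where "Pk x = inner (x - pk) uk" for x
  define Pl where "Pl x = inner (x - pl) ul" for x
  have Gkp: "x \<in> \<gamma>k \<and> norm x \<le> 1 \<and> \<bar>inner (x - pk) vk\<bar> \<le> C * \<alpha> \<and> \<bar>inner (x - pl) vl\<bar> > r" if x: "x \<in> Gk" for x
  proof -
    have x1: "x \<in> \<gamma>k" "x \<in> cball 0 1" "x \<notin> nbhd ll r" using x Gk1 Gk2 by blast+
    then have "x \<in> nbhd lk (C * \<alpha>)" using nk by blast
    then have "\<bar>inner (x - pk) vk\<bar> \<le> C * \<alpha>" using nbhd_in[OF k(2,4,5,3)] by blast
    moreover have "\<bar>inner (x - pl) vl\<bar> > r" using nbhd_out[OF l(2,4,5,3)] x1(3) by blast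
    ultimately show ?thesis using x1 by auto
  qed
  have Glp: "y \<in> \<gamma>l \<and> norm y \<le> 1 \<and> \<bar>inner (y - pl) vl\<bar> \<le> C * \<alpha> \<and> \<bar>inner (y - pk) vk\<bar> > r" if y: "y \<in> Gl" for y
  proof -
    have y1: "y \<in> \<gamma>l" "y \<in> cball 0 1" "y \<notin> nbhd lk r" using y Gl1 Gl2 by blast+
    then have "y \<in> nbhd ll (C * \<alpha>)" using nl by blast
    then have "\<bar>inner (y - pl) vl\<bar> \<le> C * \<alpha>" using nbhd_in[OF l(2,4,5,3)] by blast
    moreover have "\<bar>inner (y - pk) vk\<bar> > r" using nbhd_out[OF k(2,4,5,3)] y1(3) by blast
    ultimately show ?thesis using y1 by auto
  qed
  have n2: "norm (y - x) \<le> 2" if "norm x \<le> 1" "norm y \<le> 1" for x y :: pt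
    using norm_triangle_ineq4[of y x] that by linarith
  have repk: "x = pk + Pk x *\<^sub>R uk + fk (Pk x) *\<^sub>R vk \<and> Pk x \<in> Ak" if xg: "x \<in> \<gamma>k" for x
  proof -
    obtain t where t: "t \<in> Ak" "x = pk + t *\<^sub>R uk + fk t *\<^sub>R vk" using xg k(7) by blast
    then have "Pk x = t" unfolding Pk_def using graph_coords(1)[OF k(2,4,5)] by simp
    then show ?thesis using t by simp
  qed
  have repl: "y = pl + Pl y *\<^sub>R ul + fl (Pl y) *\<^sub>R vl \<and> Pl y \<in> Al" if yg: "y \<in> \<gamma>l" for y
  proof -
    obtain t where t: "t \<in> Al" "y = pl + t *\<^sub>R ul + fl t *\<^sub>R vl" using yg l(7) by blast
    then have "Pl y = t" unfolding Pl_def using graph_coords(1)[OF l(2,4,5)] by simp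
    then show ?thesis using t by simp
  qed
  have flk: "\<bar>fk a - fk b\<bar> \<le> \<beta> * \<bar>a - b\<bar>" if "a \<in> Ak" "b \<in> Ak" for a b
    using lipschitz_onD[OF k(6) that] by (simp add: dist_real_def)
  have fll: "\<bar>fl a - fl b\<bar> \<le> \<beta> * \<bar>a - b\<bar>" if "a \<in> Al" "b \<in> Al" for a b
    using lipschitz_onD[OF l(6) that] by (simp add: dist_real_def)
  have G2k: "\<bar>Pk x - Pk x'\<bar> * (r/8) \<le> \<bar>inner e (x - x')\<bar>"
    if "x \<in> \<gamma>k" "x' \<in> \<gamma>k" "norm e = 1" "\<bar>inner e uk\<bar> \<ge> r/4" for x x' e
  proof -
    have "\<bar>Pk x - Pk x'\<bar> * (r/8) \<le> \<bar>inner e ((pk + Pk x *\<^sub>R uk + fk (Pk x) *\<^sub>R vk) - (pk + Pk x' *\<^sub>R uk + fk (Pk x') *\<^sub>R vk))\<bar>"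
      using G2[OF k(2,4,5) that(3,4), of \<beta>] br flk repk that(1,2) unfolding \<beta>_def by blast
    then show ?thesis using repk[OF that(1)] repk[OF that(2)] by simp
  qed
  have G2l: "\<bar>Pl y - Pl y'\<bar> * (r/8) \<le> \<bar>inner e (y - y')\<bar>"
    if "y \<in> \<gamma>l" "y' \<in> \<gamma>l" "norm e = 1" "\<bar>inner e ul\<bar> \<ge> r/4" for y y' e
  proof -
    have "\<bar>Pl y - Pl y'\<bar> * (r/8) \<le> \<bar>inner e ((pl + Pl y *\<^sub>R ul + fl (Pl y) *\<^sub>R vl) - (pl + Pl y' *\<^sub>R ul + fl (Pl y') *\<^sub>R vl))\<bar>"
      using G2[OF l(2,4,5) that(3,4), of \<beta>] br fll repl that(1,2) unfolding \<beta>_def by blast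
    then show ?thesis using repl[OF that(1)] repl[OF that(2)] by simp
  qed
  have distk: "dist x x' \<le> 2 * \<bar>Pk x - Pk x'\<bar>" if "x \<in> \<gamma>k" "x' \<in> \<gamma>k" for x x'
  proof -
    have "x - x' = (Pk x - Pk x') *\<^sub>R uk + (fk (Pk x) - fk (Pk x')) *\<^sub>R vk"
      using repk[OF that(1)] repk[OF that(2)] by (metis (no_types, lifting) add_diff_cancel_left add_diff_add scaleR_diff_left)
    then have "norm (x - x') \<le> norm ((Pk x - Pk x') *\<^sub>R uk) + norm ((fk (Pk x) - fk (Pk x')) *\<^sub>R vk)"
      by (metis norm_triangle_ineq)
    also have "\<dots> = \<bar>Pk x - Pk x'\<bar> + \<bar>fk (Pk x) - fk (Pk x')\<bar>" using k(2,4) by simp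
    also have "\<dots> \<le> \<bar>Pk x - Pk x'\<bar> + \<beta> * \<bar>Pk x - Pk x'\<bar>" using flk repk that by simp
    also have "\<dots> \<le> 2 * \<bar>Pk x - Pk x'\<bar>" using b1 b0 unfolding \<beta>_def
      by (simp add: mult_left_le_one_le)
    finally show ?thesis by (simp add: dist_norm)
  qed
  have distl: "dist y y' \<le> 2 * \<bar>Pl y - Pl y'\<bar>" if "y \<in> \<gamma>l" "y' \<in> \<gamma>l" for y y'
  proof -
    have "y - y' = (Pl y - Pl y') *\<^sub>R ul + (fl (Pl y) - fl (Pl y')) *\<^sub>R vl"
      using repl[OF that(1)] repl[OF that(2)] by (metis (no_types, lifting) add_diff_cancel_left add_diff_add scaleR_diff_left)
    then have "norm (y - y') \<le> norm ((Pl y - Pl y') *\<^sub>R ul) + norm ((fl (Pl y) - fl (Pl y')) *\<^sub>R vl)"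
      by (metis norm_triangle_ineq)
    also have "\<dots> = \<bar>Pl y - Pl y'\<bar> + \<bar>fl (Pl y) - fl (Pl y')\<bar>" using l(2,4) by simp
    also have "\<dots> \<le> \<bar>Pl y - Pl y'\<bar> + \<beta> * \<bar>Pl y - Pl y'\<bar>" using fll repl that by simp
    also have "\<dots> \<le> 2 * \<bar>Pl y - Pl y'\<bar>" using b1 b0 unfolding \<beta>_def
      by (simp add: mult_left_le_one_le)
    finally show ?thesis by (simp add: dist_norm)
  qed
  have trk: "\<bar>inner e uk\<bar> \<ge> r/4" if "x \<in> Gk" "y \<in> Gl" "norm e = 1" "inner e (y - x) = 0" for x y e
  proof -
    have "inner e (x - y) = 0" using that(4) by (simp add: inner_diff_right)
    moreover have "norm (x - y) \<le> 2" using n2 Gkp[OF that(1)] Glp[OF that(2)] by blast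
    ultimately show ?thesis
      using transv[OF k(2,4,5), where x=y and y=x and p=pk and r=r and c="C * \<alpha>" and e=e] Gkp[OF that(1)] Glp[OF that(2)] cr r0 that(3) by blast
  qed
  have trl: "\<bar>inner e ul\<bar> \<ge> r/4" if "x \<in> Gk" "y \<in> Gl" "norm e = 1" "inner e (y - x) = 0" for x y e
  proof -
    have "norm (y - x) \<le> 2" using n2 Gkp[OF that(1)] Glp[OF that(2)] by blast
    then show ?thesis
      using transv[OF l(2,4,5), where x=x and y=y and p=pl and r=r and c="C * \<alpha>" and e=e] Gkp[OF that(1)] Glp[OF that(2)] cr r0 that(3,4) by blast
  qed
  have neq: "x \<noteq> y" if "x \<in> Gk" "y \<in> Gl" for x y
    using Gkp[OF that(1)] Glp[OF that(2)] cr r0 by force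
  define ee where "ee \<theta> = ((cos \<theta>, sin \<theta>) :: pt)" for \<theta>
  have nee: "norm (ee \<theta>) = 1" for \<theta> by (simp add: ee_def norm_Pair)
  have proj_ee: "proj \<theta> x = inner x (ee \<theta>)" for \<theta> x unfolding ee_def by (rule proj_inner)
  have contPk: "continuous_on UNIV Pk" unfolding Pk_def by (intro continuous_intros)
  have contPl: "continuous_on UNIV Pl" unfolding Pl_def by (intro continuous_intros)
  have cAk: "compact (Pk ` Gk)" using compact_continuous_image[OF continuous_on_subset[OF contPk] cGk] by blast
  have cAl: "compact (Pl ` Gl)" using compact_continuous_image[OF continuous_on_subset[OF contPl] cGl] by blast
  define KK where "KK = {z \<in> {0..pi} \<times> (Gk \<times> Gl). inner (ee (fst z)) (snd (snd z) - fst (snd z)) = 0}"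
  have cKK: "compact KK" unfolding KK_def
    by (intro compact_zero_set compact_Times cGk cGl compact_Icc) (unfold ee_def, intro continuous_intros)
  define W where "W = (\<lambda>z. (fst z, Pk (fst (snd z)))) ` KK"
  have cW: "compact W" unfolding W_def
    by (intro compact_continuous_image cKK) (unfold Pk_def, intro continuous_intros)
  have memW: "(\<theta>, t) \<in> W \<longleftrightarrow> (\<exists>x\<in>Gk. \<exists>y\<in>Gl. 0 \<le> \<theta> \<and> \<theta> \<le> pi \<and> inner (ee \<theta>) (y - x) = 0 \<and> t = Pk x)" for \<theta> t
  proof
    assume "(\<theta>, t) \<in> W"
    then obtain z where z: "z \<in> KK" "(\<theta>, t) = (fst z, Pk (fst (snd z)))" unfolding W_def by blast
    then show "\<exists>x\<in>Gk. \<exists>y\<in>Gl. 0 \<le> \<theta> \<and> \<theta> \<le> pi \<and> inner (ee \<theta>) (y - x) = 0 \<and> t = Pk x"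
      unfolding KK_def by (cases z) auto
  next
    assume "\<exists>x\<in>Gk. \<exists>y\<in>Gl. 0 \<le> \<theta> \<and> \<theta> \<le> pi \<and> inner (ee \<theta>) (y - x) = 0 \<and> t = Pk x"
    then obtain x y where xy: "x \<in> Gk" "y \<in> Gl" "0 \<le> \<theta>" "\<theta> \<le> pi" "inner (ee \<theta>) (y - x) = 0" "t = Pk x" by blast
    then have "(\<theta>, x, y) \<in> KK" unfolding KK_def by auto
    then show "(\<theta>, t) \<in> W" unfolding W_def using xy(6) by (auto intro!: image_eqI[where x="(\<theta>, x, y)"])
  qed
  have Wsets: "W \<in> sets (lborel \<Otimes>\<^sub>M lborel)"
    by (subst lborel_prod) (simp add: borel_closed compact_imp_closed cW)
  have cfst: "continuous_on A (fst :: 'a::topological_space \<times> 'b::topological_space \<Rightarrow> 'a)" for A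
    using continuous_on_fst[OF continuous_on_id'] by simp
  have cproj: "continuous_on A (proj \<theta>)" for A \<theta> unfolding proj_def[abs_def] by (intro continuous_intros)
  have divr: "a \<le> c / r * b" if "a * (r/8) \<le> b * (c / 8)" for a b c
    using that r0 by (simp add: field_simps)
  have fin: "emeasure lborel A = ennreal (measure lborel A)" if "compact A" for A :: "real set"
    using emeasure_bounded_finite[OF compact_imp_bounded[OF that]] by (simp add: emeasure_eq_ennreal_measure)
  have muk: "\<alpha>^3/C \<le> 2 * measure lborel (Pk ` Gk)"
  proof -
    have "hausdorff1 Gk \<le> ennreal (2 * measure lborel (Pk ` Gk))"
      by (rule haus_bound[OF cAk]) (use distk Gkp in auto)
    then have "ennreal (\<alpha>^3/C) \<le> ennreal (2 * measure lborel (Pk ` Gk))" using Hk by (rule order_trans[rotated])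
    then show ?thesis by (subst (asm) ennreal_le_iff) auto
  qed
  have mul: "\<alpha>^3/C \<le> 2 * measure lborel (Pl ` Gl)"
  proof -
    have "hausdorff1 Gl \<le> ennreal (2 * measure lborel (Pl ` Gl))"
      by (rule haus_bound[OF cAl]) (use distl Glp in auto)
    then have "ennreal (\<alpha>^3/C) \<le> ennreal (2 * measure lborel (Pl ` Gl))" using Hl by (rule order_trans[rotated])
    then show ?thesis by (subst (asm) ennreal_le_iff) auto
  qed
  have stepT: "ennreal (r/16) * emeasure lborel (Pair \<theta> -` W) \<le> emeasure lebesgue {t. line_of \<theta> t \<in> lines_meeting2 Gk Gl}" for \<theta>
  proof -
    define X where "X = fst ` {z \<in> Gk \<times> Gl. inner (ee \<theta>) (snd z - fst z) = 0}"
    have cX: "compact X" unfolding X_def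
      by (intro compact_continuous_image compact_zero_set compact_Times cGk cGl cfst) (unfold ee_def, intro continuous_intros)
    define S where "S = proj \<theta> ` X"
    have cS: "compact S" unfolding S_def by (intro compact_continuous_image cX cproj)
    have Xp: "x \<in> Gk \<and> (\<exists>y\<in>Gl. inner (ee \<theta>) (y - x) = 0)" if "x \<in> X" for x
      using that unfolding X_def by auto
    have "emeasure lborel (Pair \<theta> -` W) \<le> ennreal (2 * (8/r) * measure lborel S)"
    proof (rule lip1d[OF cS, where R="\<lambda>s t. \<exists>x\<in>X. s = proj \<theta> x \<and> t = Pk x"])
      show "8/r > 0" using r0 by simp
      show "\<forall>t\<in>Pair \<theta> -` W. \<exists>s\<in>S. \<exists>x\<in>X. s = proj \<theta> x \<and> t = Pk x"
      proof
        fix t assume "t \<in> Pair \<theta> -` W"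
        then obtain x y where xy: "x \<in> Gk" "y \<in> Gl" "inner (ee \<theta>) (y - x) = 0" "t = Pk x" using memW by auto
        then have "x \<in> X" unfolding X_def by (auto intro!: image_eqI[where x="(x, y)"])
        then show "\<exists>s\<in>S. \<exists>x\<in>X. s = proj \<theta> x \<and> t = Pk x" using xy(4) unfolding S_def by blast
      qed
      show "\<forall>s t s' t'. s \<in> S \<longrightarrow> s' \<in> S \<longrightarrow> (\<exists>x\<in>X. s = proj \<theta> x \<and> t = Pk x) \<longrightarrow>
          (\<exists>x\<in>X. s' = proj \<theta> x \<and> t' = Pk x) \<longrightarrow> \<bar>t - t'\<bar> \<le> 8 / r * \<bar>s - s'\<bar>"
      proof (intro allI impI)
        fix s t s' t'
        assume "\<exists>x\<in>X. s = proj \<theta> x \<and> t = Pk x" "\<exists>x\<in>X. s' = proj \<theta> x \<and> t' = Pk x"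
        then obtain x x' where xx: "x \<in> X" "x' \<in> X" "s = proj \<theta> x" "t = Pk x" "s' = proj \<theta> x'" "t' = Pk x'" by blast
        obtain y where y: "y \<in> Gl" "inner (ee \<theta>) (y - x) = 0" using Xp[OF xx(1)] by blast
        have xG: "x \<in> Gk" "x' \<in> Gk" using Xp xx by auto
        have "\<bar>inner (ee \<theta>) uk\<bar> \<ge> r/4" using trk[OF xG(1) y(1) nee y(2)] .
        then have "\<bar>Pk x - Pk x'\<bar> * (r/8) \<le> \<bar>inner (ee \<theta>) (x - x')\<bar>"
          using G2k[OF _ _ nee] Gkp xG by blast
        moreover have "inner (ee \<theta>) (x - x') = proj \<theta> x - proj \<theta> x'"
          by (simp add: proj_ee inner_diff_right inner_commute)
        ultimately have "\<bar>t - t'\<bar> * (r/8) \<le> \<bar>s - s'\<bar> * (8/8)" using xx by simp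
        then show "\<bar>t - t'\<bar> \<le> 8 / r * \<bar>s - s'\<bar>" by (rule divr)
      qed
    qed
    moreover have "S \<subseteq> proj \<theta> ` Gk \<inter> proj \<theta> ` Gl"
    proof
      fix s assume "s \<in> S"
      then obtain x where x: "x \<in> X" "s = proj \<theta> x" unfolding S_def by blast
      obtain y where y: "y \<in> Gl" "inner (ee \<theta>) (y - x) = 0" using Xp[OF x(1)] by blast
      have "proj \<theta> y = proj \<theta> x" using y(2) by (simp add: proj_ee inner_diff_right inner_commute)
      then show "s \<in> proj \<theta> ` Gk \<inter> proj \<theta> ` Gl" using x y Xp by (metis IntI image_eqI)
    qed
    ultimately have A: "ennreal (r/16) * emeasure lborel (Pair \<theta> -` W) \<le> ennreal (r/16) * ennreal (2 * (8/r) * measure lborel S)"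
      by (intro mult_left_mono) auto
    have B: "ennreal (r/16) * ennreal (2 * (8/r) * measure lborel S) = ennreal (measure lborel S)"
    proof -
      have "r/16 * (2 * (8/r) * measure lborel S) = measure lborel S" using r0 by (simp add: field_simps)
      then show ?thesis using r0 by (metis ennreal_mult measure_nonneg zero_le_divide_iff less_imp_le zero_le_numeral mult_nonneg_nonneg)
    qed
    have cI: "compact (proj \<theta> ` Gk \<inter> proj \<theta> ` Gl)"
      by (intro compact_Int compact_continuous_image cGk cGl cproj)
    have "ennreal (measure lborel S) = emeasure lborel S" using fin[OF cS] by simp
    also have "\<dots> \<le> emeasure lborel (proj \<theta> ` Gk \<inter> proj \<theta> ` Gl)"
      using \<open>S \<subseteq> _\<close> cI by (intro emeasure_mono) (auto simp: borel_closed compact_imp_closed)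
    also have "\<dots> = emeasure lebesgue {t. line_of \<theta> t \<in> lines_meeting2 Gk Gl}"
      unfolding sect_eq using cI by (simp add: borel_closed compact_imp_closed)
    finally show ?thesis using A B by simp
  qed
  have stepS: "ennreal (r/32 * measure lborel (Pl ` Gl)) \<le> emeasure lborel ((\<lambda>\<theta>. (\<theta>, s)) -` W)"
    if s: "s \<in> Pk ` Gk" for s
  proof -
    obtain x0 where x0: "x0 \<in> Gk" "s = Pk x0" using s by blast
    define S where "S = (\<lambda>\<theta>. (\<theta>, s)) -` W"
    have Seq: "S = fst ` (W \<inter> (UNIV \<times> {s}))"
    proof (intro set_eqI iffI)
      fix \<theta> assume "\<theta> \<in> S"
      then have "(\<theta>, s) \<in> W \<inter> (UNIV \<times> {s})" unfolding S_def by simp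
      then show "\<theta> \<in> fst ` (W \<inter> (UNIV \<times> {s}))" by (metis fst_conv image_eqI)
    next
      fix \<theta> assume "\<theta> \<in> fst ` (W \<inter> (UNIV \<times> {s}))"
      then obtain z where "z \<in> W" "snd z = s" "\<theta> = fst z" by auto
      then show "\<theta> \<in> S" unfolding S_def by (cases z) auto
    qed
    have cS: "compact S" unfolding Seq
      by (intro compact_continuous_image cfst compact_Int_closed cW closed_Times closed_UNIV closed_singleton)
    have "emeasure lborel (Pl ` Gl) \<le> ennreal (2 * (16/r) * measure lborel S)"
    proof (rule lip1d[OF cS, where R="\<lambda>\<theta> t. \<exists>x\<in>Gk. \<exists>y\<in>Gl. Pk x = s \<and> inner (ee \<theta>) (y - x) = 0 \<and> t = Pl y"])
      show "16/r > 0" using r0 by simp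
      show "\<forall>t\<in>Pl ` Gl. \<exists>\<theta>\<in>S. \<exists>x\<in>Gk. \<exists>y\<in>Gl. Pk x = s \<and> inner (ee \<theta>) (y - x) = 0 \<and> t = Pl y"
      proof
        fix t assume "t \<in> Pl ` Gl"
        then obtain y where y: "y \<in> Gl" "t = Pl y" by blast
        have "y - x0 \<noteq> 0" using neq[OF x0(1) y(1)] by simp
        then obtain \<theta> where th: "0 \<le> \<theta>" "\<theta> < pi" "fst (y - x0) * cos \<theta> + snd (y - x0) * sin \<theta> = 0"
          using angle_exists by blast
        have ip: "inner (ee \<theta>) (y - x0) = 0" using th(3) unfolding ee_def by (simp add: inner_prod_def mult.commute)
        then have "(\<theta>, s) \<in> W" using memW x0 y th by auto
        then have "\<theta> \<in> S" unfolding S_def by simp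
        then show "\<exists>\<theta>\<in>S. \<exists>x\<in>Gk. \<exists>y\<in>Gl. Pk x = s \<and> inner (ee \<theta>) (y - x) = 0 \<and> t = Pl y"
          using x0 y ip by metis
      qed
      show "\<forall>\<theta> t \<theta>' t'. \<theta> \<in> S \<longrightarrow> \<theta>' \<in> S \<longrightarrow> (\<exists>x\<in>Gk. \<exists>y\<in>Gl. Pk x = s \<and> inner (ee \<theta>) (y - x) = 0 \<and> t = Pl y) \<longrightarrow>
          (\<exists>x\<in>Gk. \<exists>y\<in>Gl. Pk x = s \<and> inner (ee \<theta>') (y - x) = 0 \<and> t' = Pl y) \<longrightarrow> \<bar>t - t'\<bar> \<le> 16 / r * \<bar>\<theta> - \<theta>'\<bar>"
      proof (intro allI impI)
        fix \<theta>1 t1 \<theta>2 t2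
        assume "\<exists>x\<in>Gk. \<exists>y\<in>Gl. Pk x = s \<and> inner (ee \<theta>1) (y - x) = 0 \<and> t1 = Pl y"
          "\<exists>x\<in>Gk. \<exists>y\<in>Gl. Pk x = s \<and> inner (ee \<theta>2) (y - x) = 0 \<and> t2 = Pl y"
        then obtain x1 y1 x2 y2 where a: "x1 \<in> Gk" "y1 \<in> Gl" "Pk x1 = s" "inner (ee \<theta>1) (y1 - x1) = 0" "t1 = Pl y1"
          "x2 \<in> Gk" "y2 \<in> Gl" "Pk x2 = s" "inner (ee \<theta>2) (y2 - x2) = 0" "t2 = Pl y2" by blast
        have "dist x1 x2 \<le> 2 * \<bar>Pk x1 - Pk x2\<bar>" using distk Gkp a by blast
        then have x12: "x1 = x2" using a by simp
        have "\<bar>inner (ee \<theta>2) ul\<bar> \<ge> r/4" using trl[OF a(6,7) nee a(9)] .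
        then have "\<bar>Pl y1 - Pl y2\<bar> * (r/8) \<le> \<bar>inner (ee \<theta>2) (y1 - y2)\<bar>"
          using G2l[OF _ _ nee] Glp a by blast
        also have "inner (ee \<theta>2) (y1 - y2) = inner (ee \<theta>2 - ee \<theta>1) (y1 - x1)"
        proof -
          have "y1 - y2 = (y1 - x1) - (y2 - x2)" using x12 by simp
          then have "inner (ee \<theta>2) (y1 - y2) = inner (ee \<theta>2) (y1 - x1) - inner (ee \<theta>2) (y2 - x2)"
            by (simp add: inner_diff_right)
          then show ?thesis using a(4,9) by (simp add: inner_diff_left)
        qed
        also have "\<bar>inner (ee \<theta>2 - ee \<theta>1) (y1 - x1)\<bar> \<le> norm (ee \<theta>2 - ee \<theta>1) * norm (y1 - x1)"
          by (rule Cauchy_Schwarz_ineq2)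
        also have "\<dots> \<le> \<bar>\<theta>2 - \<theta>1\<bar> * 2"
          using e_lip[of \<theta>2 \<theta>1] n2 Gkp[OF a(1)] Glp[OF a(2)] unfolding ee_def
          by (intro mult_mono) auto
        finally have "\<bar>t1 - t2\<bar> * (r/8) \<le> \<bar>\<theta>1 - \<theta>2\<bar> * (16/8)" using a by (simp add: abs_minus_commute)
        then show "\<bar>t1 - t2\<bar> \<le> 16 / r * \<bar>\<theta>1 - \<theta>2\<bar>" by (rule divr)
      qed
    qed
    then have "ennreal (measure lborel (Pl ` Gl)) \<le> ennreal (2 * (16/r) * measure lborel S)"
      using fin[OF cAl] by simp
    then have "measure lborel (Pl ` Gl) \<le> 2 * (16/r) * measure lborel S"
      using r0 by (subst (asm) ennreal_le_iff) auto
    then have "r/32 * measure lborel (Pl ` Gl) \<le> measure lborel S"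
      using r0 by (simp add: field_simps)
    then show ?thesis using fin[OF cS] unfolding S_def by simp
  qed
  define ml where "ml = measure lborel (Pl ` Gl)"
  define mk where "mk = measure lborel (Pk ` Gk)"
  have Tmeas: "(\<lambda>\<theta>. emeasure lborel (Pair \<theta> -` W)) \<in> borel_measurable lborel"
    by (rule lborel.measurable_emeasure_Pair[OF Wsets])
  have Akm: "Pk ` Gk \<in> sets lborel" using cAk by (simp add: borel_closed compact_imp_closed)
  have empty: "Pair \<theta> -` W = {}" if "\<not> (0 \<le> \<theta> \<and> \<theta> \<le> pi)" for \<theta>
    using memW that by auto
  have "ennreal (r/16) * (ennreal (r/32 * ml) * emeasure lborel (Pk ` Gk))
      = ennreal (r/16) * (\<integral>\<^sup>+s. ennreal (r/32 * ml) * indicator (Pk ` Gk) s \<partial>lborel)"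
    by (simp add: nn_integral_cmult_indicator[OF Akm])
  also have "\<dots> \<le> ennreal (r/16) * (\<integral>\<^sup>+s. emeasure lborel ((\<lambda>\<theta>. (\<theta>, s)) -` W) \<partial>lborel)"
  proof (intro mult_left_mono nn_integral_mono)
    fix s
    show "ennreal (r/32 * ml) * indicator (Pk ` Gk) s \<le> emeasure lborel ((\<lambda>\<theta>. (\<theta>, s)) -` W)"
    proof (cases "s \<in> Pk ` Gk")
      case True
      then show ?thesis using stepS[OF True] unfolding ml_def by simp
    next
      case False
      then show ?thesis by simp
    qed
  qed simp
  also have "\<dots> = ennreal (r/16) * emeasure (lborel \<Otimes>\<^sub>M lborel) W"
    by (simp add: lborel_pair.emeasure_pair_measure_alt2[OF Wsets])
  also have "\<dots> = (\<integral>\<^sup>+\<theta>. ennreal (r/16) * emeasure lborel (Pair \<theta> -` W) \<partial>lborel)"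
    by (simp add: nn_integral_cmult[OF Tmeas] lborel.emeasure_pair_measure_alt[OF Wsets])
  also have "\<dots> = (\<integral>\<^sup>+\<theta>. ennreal (r/16) * emeasure lborel (Pair \<theta> -` W) * indicator {0..<pi} \<theta> \<partial>lborel)"
  proof (rule nn_integral_cong_AE)
    show "AE \<theta> in lborel. ennreal (r/16) * emeasure lborel (Pair \<theta> -` W) = ennreal (r/16) * emeasure lborel (Pair \<theta> -` W) * indicator {0..<pi} \<theta>"
      using AE_lborel_singleton[of pi]
    proof eventually_elim
      case (elim \<theta>)
      then show ?case using empty[of \<theta>] by (cases "0 \<le> \<theta> \<and> \<theta> < pi") (auto split: split_indicator)
    qed
  qed
  also have "\<dots> \<le> (\<integral>\<^sup>+\<theta>. emeasure lebesgue {t. line_of \<theta> t \<in> lines_meeting2 Gk Gl} * indicator {0..<pi} \<theta> \<partial>lborel)"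
    by (intro nn_integral_mono) (auto split: split_indicator intro: stepT)
  also have "\<dots> = eta (lines_meeting2 Gk Gl)" unfolding eta_def by simp
  finally have main: "ennreal (r/16) * (ennreal (r/32 * ml) * ennreal mk) \<le> eta (lines_meeting2 Gk Gl)"
    using fin[OF cAk] unfolding mk_def by simp
  have ml0: "ml \<ge> 0" "mk \<ge> 0" unfolding ml_def mk_def by simp_all
  have e1: "ennreal (r/32 * ml * mk) = ennreal (r/32 * ml) * ennreal mk"
    by (rule ennreal_mult) (use r0 ml0 in auto)
  have e2: "ennreal (r/16 * (r/32 * ml * mk)) = ennreal (r/16) * ennreal (r/32 * ml * mk)"
    by (rule ennreal_mult) (use r0 ml0 in auto)
  have "ennreal (r/16) * (ennreal (r/32 * ml) * ennreal mk) = ennreal (r/16 * (r/32 * ml * mk))"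
    unfolding e2 e1 ..
  also have "r/16 * (r/32 * ml * mk) = \<alpha> / 512 * (ml * mk)" using rr by (simp add: field_simps)
  finally have main2: "ennreal (\<alpha> / 512 * (ml * mk)) \<le> eta (lines_meeting2 Gk Gl)" using main by simp
  have h0: "\<alpha>^3/(2*C) \<ge> 0" using a0 C by simp
  have "\<alpha>^3/(2*C) \<le> ml" "\<alpha>^3/(2*C) \<le> mk" using mul muk C unfolding ml_def mk_def by (simp_all add: field_simps)
  then have "(\<alpha>^3/(2*C)) * (\<alpha>^3/(2*C)) \<le> ml * mk" using h0 by (intro mult_mono) auto
  then have "\<alpha> / 512 * ((\<alpha>^3/(2*C)) * (\<alpha>^3/(2*C))) \<le> \<alpha> / 512 * (ml * mk)" using a0 by (intro mult_left_mono) auto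
  moreover have "\<alpha> / 512 * ((\<alpha>^3/(2*C)) * (\<alpha>^3/(2*C))) = \<alpha>^7/(2048*C^2)"
    using C by (simp add: field_simps power2_eq_square) (simp add: power_def)?
  ultimately have "ennreal (\<alpha>^7/(2048*C^2)) \<le> ennreal (\<alpha> / 512 * (ml * mk))" by (intro ennreal_leI) simp
  then show ?thesis using main2 by (rule order_trans)
qed

lemma integral_part:
  assumes sub: "Gk \<subseteq> E" "Gl \<subseteq> E" and disj: "Gk \<inter> Gl = {}" and cGk: "compact Gk" and cGl: "compact Gl"
  shows "eta (lines_meeting2 Gk Gl) \<le> eta_integral (\<lambda>lne. indicator (lines_meeting E) lne * (ecard (E \<inter> lne) - 1))"
  unfolding eta_def eta_integral_def
proof (intro nn_integral_mono mult_right_mono)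
  fix \<theta> :: real
  define S where "S = proj \<theta> ` Gk \<inter> proj \<theta> ` Gl"
  have cproj: "continuous_on A (proj \<theta>)" for A unfolding proj_def[abs_def] by (intro continuous_intros)
  have cS: "compact S" unfolding S_def by (intro compact_Int compact_continuous_image cGk cGl cproj)
  then have Sm: "S \<in> sets lborel" by (simp add: borel_closed compact_imp_closed)
  have "emeasure lebesgue {t. line_of \<theta> t \<in> lines_meeting2 Gk Gl} = emeasure lborel S"
    unfolding sect_eq S_def[symmetric] using Sm by simp
  also have "\<dots> = (\<integral>\<^sup>+t. indicator S t \<partial>lborel)" using Sm by simp
  also have "\<dots> \<le> (\<integral>\<^sup>+t. indicator (lines_meeting E) (line_of \<theta> t) * (ecard (E \<inter> line_of \<theta> t) - 1) \<partial>lborel)"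
  proof (intro nn_integral_mono)
    fix t
    show "indicator S t \<le> indicator (lines_meeting E) (line_of \<theta> t) * (ecard (E \<inter> line_of \<theta> t) - 1)"
    proof (cases "t \<in> S")
      case False then show ?thesis by simp
    next
      case True
      then obtain x y where xy: "x \<in> Gk" "y \<in> Gl" "proj \<theta> x = t" "proj \<theta> y = t" unfolding S_def by force
      have xl: "x \<in> line_of \<theta> t" "y \<in> line_of \<theta> t" using xy by (auto simp: line_of_def)
      have ne: "x \<noteq> y" using disj xy by blast
      have lm: "line_of \<theta> t \<in> lines_meeting E" unfolding lines_meeting_def
        using line_of_affine[of \<theta> t] xl xy sub by blast
      have sub2: "{x, y} \<subseteq> E \<inter> line_of \<theta> t" using xl xy sub by blast
      have "1 \<le> ecard (E \<inter> line_of \<theta> t) - 1"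
      proof (cases "finite (E \<inter> line_of \<theta> t)")
        case True
        have "card {x, y} \<le> card (E \<inter> line_of \<theta> t)" by (rule card_mono[OF True sub2])
        then have c2: "2 \<le> real (card (E \<inter> line_of \<theta> t))" using ne by simp
        have "ecard (E \<inter> line_of \<theta> t) - 1 = ennreal (real (card (E \<inter> line_of \<theta> t)) - 1)"
          using True by (simp add: ecard_def ennreal_minus[symmetric])
        then show ?thesis using c2 by simp
      next
        case False
        then show ?thesis by (simp add: ecard_def)
      qed
      then show ?thesis using True lm by simp
    qed
  qed
  finally show "emeasure lebesgue {t. line_of \<theta> t \<in> lines_meeting2 Gk Gl}
      \<le> (\<integral>\<^sup>+t. indicator (lines_meeting E) (line_of \<theta> t) * (ecard (E \<inter> line_of \<theta> t) - 1) \<partial>lborel)" .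
qed simp

theorem lemma5p2:
  fixes C Clip :: real
  assumes "C \<ge> 1" and "Clip \<ge> 1"
  shows "\<exists>\<alpha>0 > 0. \<exists>c > 0. \<forall>\<alpha>. 0 < \<alpha> \<and> \<alpha> < \<alpha>0 \<longrightarrow>
    (\<forall>lk ll \<gamma>k \<gamma>l E Gk Gl.
       affine_line lk \<and> affine_line ll \<and>
       lip_graph (Clip * \<alpha>) lk \<gamma>k \<and> lip_graph (Clip * \<alpha>) ll \<gamma>l \<and>
       \<gamma>k \<inter> cball 0 1 \<subseteq> nbhd lk (C * \<alpha>) \<and>
       \<gamma>l \<inter> cball 0 1 \<subseteq> nbhd ll (C * \<alpha>) \<and>
       compact Gk \<and> compact Gl \<and>
       Gk \<subseteq> (E \<inter> \<gamma>k) - nbhd ll (sqrt \<alpha>) \<and> (E \<inter> \<gamma>k) - nbhd ll (sqrt \<alpha>) \<subseteq> cball 0 1 \<and>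
       Gl \<subseteq> (E \<inter> \<gamma>l) - nbhd lk (sqrt \<alpha>) \<and> (E \<inter> \<gamma>l) - nbhd lk (sqrt \<alpha>) \<subseteq> cball 0 1 \<and>
       hausdorff1 Gk \<ge> ennreal (\<alpha> ^ 3 / C) \<and> hausdorff1 Gl \<ge> ennreal (\<alpha> ^ 3 / C)
     \<longrightarrow> eta (lines_meeting2 Gk Gl) \<ge> ennreal (c * \<alpha> ^ 7) \<and>
         eta_integral (\<lambda>lne. indicator (lines_meeting E) lne * (ecard (E \<inter> lne) - 1))
           \<ge> ennreal (c * \<alpha> ^ 7))"
proof -
  have C: "C \<ge> 1" and Cl: "Clip \<ge> 1" using assms by auto
  define q where "q = 1 / (8 * (C + Clip))"
  have q0: "q > 0" using C Cl unfolding q_def by simp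
  have Cq: "C * q \<le> 1/8" "Clip * q \<le> 1/8" using C Cl unfolding q_def by (simp_all add: field_simps)
   have P: "\<forall>\<alpha>. 0 < \<alpha> \<and> \<alpha> < q^2 \<longrightarrow>
    (\<forall>lk ll \<gamma>k \<gamma>l E Gk Gl.
       affine_line lk \<and> affine_line ll \<and>
       lip_graph (Clip * \<alpha>) lk \<gamma>k \<and> lip_graph (Clip * \<alpha>) ll \<gamma>l \<and>
       \<gamma>k \<inter> cball 0 1 \<subseteq> nbhd lk (C * \<alpha>) \<and>
       \<gamma>l \<inter> cball 0 1 \<subseteq> nbhd ll (C * \<alpha>) \<and>
       compact Gk \<and> compact Gl \<and>
       Gk \<subseteq> (E \<inter> \<gamma>k) - nbhd ll (sqrt \<alpha>) \<and> (E \<inter> \<gamma>k) - nbhd ll (sqrt \<alpha>) \<subseteq> cball 0 1 \<and>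
       Gl \<subseteq> (E \<inter> \<gamma>l) - nbhd lk (sqrt \<alpha>) \<and> (E \<inter> \<gamma>l) - nbhd lk (sqrt \<alpha>) \<subseteq> cball 0 1 \<and>
       hausdorff1 Gk \<ge> ennreal (\<alpha> ^ 3 / C) \<and> hausdorff1 Gl \<ge> ennreal (\<alpha> ^ 3 / C)
     \<longrightarrow> eta (lines_meeting2 Gk Gl) \<ge> ennreal (1/(2048*C^2) * \<alpha> ^ 7) \<and>
         eta_integral (\<lambda>lne. indicator (lines_meeting E) lne * (ecard (E \<inter> lne) - 1))
           \<ge> ennreal (1/(2048*C^2) * \<alpha> ^ 7))"
   proof (intro allI impI)
    fix \<alpha> lk ll \<gamma>k \<gamma>l E Gk Gl
    assume a: "0 < \<alpha> \<and> \<alpha> < q^2"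
    define r where "r = sqrt \<alpha>"
    have r0: "r > 0" using a unfolding r_def by simp
    have rr: "r * r = \<alpha>" using a unfolding r_def by simp
    have rq: "r < q" using real_sqrt_less_mono[of \<alpha> "q^2"] a q0 unfolding r_def by simp
    have "C * r \<le> C * q" using rq C by (intro mult_left_mono) auto
    then have Cr: "C * r \<le> 1/8" using Cq by linarith
    have "Clip * r \<le> Clip * q" using rq Cl by (intro mult_left_mono) auto
    then have Clr: "Clip * r \<le> 1/8" using Cq by linarith
    have "C * \<alpha> = (C * r) * r" using rr by (simp add: mult.assoc)
    also have "\<dots> \<le> (1/8) * r" using Cr r0 by (intro mult_right_mono) auto
    finally have cr: "C * \<alpha> \<le> r/2" using r0 by linarith
    have "Clip * \<alpha> = (Clip * r) * r" using rr by (simp add: mult.assoc)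
    also have "\<dots> \<le> (1/8) * r" using Clr r0 by (intro mult_right_mono) auto
    finally have br: "Clip * \<alpha> \<le> r/8" by linarith
    have "q \<le> C * q" using C q0 by simp
    then have "r \<le> 1" using rq Cq by linarith
    then have b1: "Clip * \<alpha> \<le> 1" using br r0 by linarith
    have b0: "Clip * \<alpha> \<ge> 0" using a Cl by simp
    assume h: "affine_line lk \<and> affine_line ll \<and>
       lip_graph (Clip * \<alpha>) lk \<gamma>k \<and> lip_graph (Clip * \<alpha>) ll \<gamma>l \<and>
       \<gamma>k \<inter> cball 0 1 \<subseteq> nbhd lk (C * \<alpha>) \<and>
       \<gamma>l \<inter> cball 0 1 \<subseteq> nbhd ll (C * \<alpha>) \<and>
       compact Gk \<and> compact Gl \<and>
       Gk \<subseteq> (E \<inter> \<gamma>k) - nbhd ll (sqrt \<alpha>) \<and> (E \<inter> \<gamma>k) - nbhd ll (sqrt \<alpha>) \<subseteq> cball 0 1 \<and>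
       Gl \<subseteq> (E \<inter> \<gamma>l) - nbhd lk (sqrt \<alpha>) \<and> (E \<inter> \<gamma>l) - nbhd lk (sqrt \<alpha>) \<subseteq> cball 0 1 \<and>
       hausdorff1 Gk \<ge> ennreal (\<alpha> ^ 3 / C) \<and> hausdorff1 Gl \<ge> ennreal (\<alpha> ^ 3 / C)"
    have e1: "eta (lines_meeting2 Gk Gl) \<ge> ennreal (\<alpha>^7/(2048*C^2))"
      using h by (elim conjE) (rule core[OF C conjunct1[OF a] r_def cr br b1 b0, unfolded r_def]; assumption)
    then have A: "eta (lines_meeting2 Gk Gl) \<ge> ennreal (1/(2048*C^2) * \<alpha> ^ 7)" by simp
    have disj: "Gk \<inter> Gl = {}"
    proof (rule ccontr)
      assume "Gk \<inter> Gl \<noteq> {}"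
      then obtain x where x: "x \<in> Gk" "x \<in> Gl" by blast
      then have "x \<in> \<gamma>k \<inter> cball 0 1" using h by blast
      then have "x \<in> nbhd lk (C * \<alpha>)" using h by blast
      then obtain z where z: "z \<in> lk" "dist x z \<le> C * \<alpha>" unfolding nbhd_def by blast
      then have "dist x z \<le> sqrt \<alpha>" using cr r0 unfolding r_def by linarith
      then have "x \<in> nbhd lk (sqrt \<alpha>)" using z unfolding nbhd_def by blast
      then show False using x h by blast
    qed
    have "eta (lines_meeting2 Gk Gl) \<le> eta_integral (\<lambda>lne. indicator (lines_meeting E) lne * (ecard (E \<inter> lne) - 1))"
      using h disj by (elim conjE) (rule integral_part; blast)
    then have "eta_integral (\<lambda>lne. indicator (lines_meeting E) lne * (ecard (E \<inter> lne) - 1)) \<ge> ennreal (1/(2048*C^2) * \<alpha> ^ 7)"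
      using A by (rule order_trans[rotated])
    then show "eta (lines_meeting2 Gk Gl) \<ge> ennreal (1/(2048*C^2) * \<alpha> ^ 7) \<and>
         eta_integral (\<lambda>lne. indicator (lines_meeting E) lne * (ecard (E \<inter> lne) - 1))
           \<ge> ennreal (1/(2048*C^2) * \<alpha> ^ 7)" using A by blast
   qed
  show ?thesis
    apply (rule exI[of _ "q^2"], rule conjI)
    subgoal using q0 by simp
    apply (rule exI[of _ "1/(2048*C^2)"], rule conjI)
    subgoal using C by simp
    by (rule P)
qed

end
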